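(* Let $f:2^N\to\mathbb R_{\ge0}$ be monotone submodular, $|N|=n$ with $\sqrt n$ an integer, $1\le k\le n$, and $S^\star\in\arg\max_{|T|\le k}f(T)$. If $\mathbb E_{S\sim\mathcal D_{\sqrt n}}[f(S)]\ge f(S^\star)/4$, then a uniformly random set $S$ of size $k$ satisfies $\mathbb E[f(S)]\ge\min(1/4,\,k/(4\sqrt n))\,f(S^\star)$.
   Context: $\mathcal D_j$ denotes the uniform distribution over subsets of $N$ of size $j$. $f$ monotone: $f(A)\le f(B)$ for $A\subseteq B$; submodular: $f(A\cup\{e\})-f(A)\ge f(B\cup\{e\})-f(B)$ for $A\subseteq B$. *)

theory Defs
  imports "HOL-Probability.Probability"
begin

definition monotone_setfun :: "'a set \<Rightarrow> ('a set \<Rightarrow> real) \<Rightarrow> bool" where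
  "monotone_setfun N f \<longleftrightarrow> (\<forall>A B. A \<subseteq> B \<and> B \<subseteq> N \<longrightarrow> f A \<le> f B)"

definition submodular_setfun :: "'a set \<Rightarrow> ('a set \<Rightarrow> real) \<Rightarrow> bool" where
  "submodular_setfun N f \<longleftrightarrow>
     (\<forall>A B e. A \<subseteq> B \<and> B \<subseteq> N \<and> e \<in> N \<longrightarrow>
        f (A \<union> {e}) - f A \<ge> f (B \<union> {e}) - f B)"

definition expect_unif :: "'a set \<Rightarrow> nat \<Rightarrow> ('a set \<Rightarrow> real) \<Rightarrow> real" where
  "expect_unif N j f =
     measure_pmf.expectation (pmf_of_set {S. S \<subseteq> N \<and> card S = j}) f"

end

theory Submission
  imports Defs
begin

lemma key_ineq:
  assumes sub: "submodular_setfun N f" and "finite T" and "T \<subseteq> N"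
  shows "(\<Sum>e\<in>T. f T - f (T - {e})) \<le> f T - f {}"
  using assms(2,3)
proof (induction T rule: finite_induct)
  case empty then show ?case by simp
next
  case (insert a U)
  have U: "U \<subseteq> N" "a \<in> N" using insert by auto
  have step: "f (insert a U) - f (insert a U - {e}) \<le> f U - f (U - {e})" if e: "e \<in> U" for e
  proof -
    have "f ((U - {e}) \<union> {e}) - f (U - {e}) \<ge> f ((insert a U - {e}) \<union> {e}) - f (insert a U - {e})"
      using sub[unfolded submodular_setfun_def, rule_format, of "U-{e}" "insert a U - {e}" e] U e
      by auto
    moreover have "(insert a U - {e}) \<union> {e} = insert a U" "(U - {e}) \<union> {e} = U" using e by auto
    ultimately show ?thesis by simp
  qed
  have eq: "insert a U - {a} = U" using insert.hyps by auto
  have "(\<Sum>e\<in>insert a U. f (insert a U) - f (insert a U - {e}))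
      = (f (insert a U) - f U) + (\<Sum>e\<in>U. f (insert a U) - f (insert a U - {e}))"
    using insert.hyps eq by (simp add: sum.insert)
  also have "\<dots> \<le> (f (insert a U) - f U) + (\<Sum>e\<in>U. f U - f (U - {e}))"
    using step by (intro add_left_mono sum_mono) auto
  also have "\<dots> \<le> (f (insert a U) - f U) + (f U - f {})"
    using insert.IH U by simp
  finally show ?case by simp
qed

lemma fin_sub: "finite N \<Longrightarrow> finite {S. S \<subseteq> N \<and> card S = j}"
  by (rule finite_subset[of _ "Pow N"]) auto

lemma dc:
  assumes "finite N"
  shows "(\<Sum>T\<in>{T. T \<subseteq> N \<and> card T = Suc j}. \<Sum>e\<in>T. h (T - {e}))
       = (\<Sum>S\<in>{S. S \<subseteq> N \<and> card S = j}. \<Sum>e\<in>N - S. (h S :: real))"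
proof -
  let ?A = "{T. T \<subseteq> N \<and> card T = Suc j}"
  let ?B = "{S. S \<subseteq> N \<and> card S = j}"
  have fA: "finite ?A" and fB: "finite ?B" using fin_sub assms by auto
  have fT: "\<forall>T\<in>?A. finite T" using assms finite_subset by auto
  have fN: "\<forall>S\<in>?B. finite (N - S)" using assms by auto
  have "(\<Sum>T\<in>?A. \<Sum>e\<in>T. h (T - {e})) = (\<Sum>(T,e)\<in>Sigma ?A (\<lambda>T. T). h (T - {e}))"
    using sum.Sigma[OF fA fT] by simp
  also have "\<dots> = (\<Sum>(S,e)\<in>Sigma ?B (\<lambda>S. N - S). h S)"
  proof (rule sum.reindex_bij_witness[where i="\<lambda>(S,e). (insert e S, e)" and j="\<lambda>(T,e). (T - {e}, e)"])
    fix a assume "a \<in> Sigma ?A (\<lambda>T. T)"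
    then show "(case case a of (T, e) \<Rightarrow> (T - {e}, e) of (S, e) \<Rightarrow> (insert e S, e)) = a"
      by auto
  next
    fix a assume a: "a \<in> Sigma ?A (\<lambda>T. T)"
    obtain T e where [simp]: "a = (T,e)" by force
    have "finite T" using a assms finite_subset by auto
    then show "(case a of (T, e) \<Rightarrow> (T - {e}, e)) \<in> Sigma ?B (\<lambda>S. N - S)"
      using a by auto
  next
    fix b assume "b \<in> Sigma ?B (\<lambda>S. N - S)"
    then show "(case case b of (S, e) \<Rightarrow> (insert e S, e) of (T, e) \<Rightarrow> (T - {e}, e)) = b"
      by auto
  next
    fix b assume b: "b \<in> Sigma ?B (\<lambda>S. N - S)"
    obtain S e where [simp]: "b = (S,e)" by force
    have "finite S" using b assms finite_subset by auto
    then show "(case b of (S, e) \<Rightarrow> (insert e S, e)) \<in> Sigma ?A (\<lambda>T. T)"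
      using b by auto
  next
    fix a assume "a \<in> Sigma ?A (\<lambda>T. T)"
    then show "(case case a of (T, e) \<Rightarrow> (T - {e}, e) of (S, e) \<Rightarrow> h S) = (case a of (T, e) \<Rightarrow> h (T - {e}))"
      by auto
  qed
  also have "\<dots> = (\<Sum>S\<in>?B. \<Sum>e\<in>N - S. h S)"
    by (rule sum.Sigma[OF fB fN, symmetric])
  finally show ?thesis .
qed


lemma choose_rel: "real (Suc j) * real (n choose Suc j) = real (n - j) * real (n choose j)"
proof -
  have "Suc j * (n choose Suc j) = (n - j) * (n choose j)"
    using binomial_absorption[of j n] binomial_absorb_comp[of n j] by simp
  then show ?thesis by (metis of_nat_mult)
qed

theorem lemma23:
  fixes N :: "'a set" and f :: "'a set \<Rightarrow> real" and n m k :: nat and Sstar :: "'a set"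
  assumes "finite N"
    and "card N = n"
    and "m * m = n"
    and "\<forall>S. S \<subseteq> N \<longrightarrow> f S \<ge> 0"
    and "monotone_setfun N f"
    and "submodular_setfun N f"
    and "1 \<le> k" and "k \<le> n"
    and "Sstar \<subseteq> N" and "card Sstar \<le> k"
    and "\<forall>T. T \<subseteq> N \<and> card T \<le> k \<longrightarrow> f T \<le> f Sstar"
    and "expect_unif N m f \<ge> f Sstar / 4"
  shows "expect_unif N k f \<ge> min (1/4) (real k / (4 * real m)) * f Sstar"
proof -
  note finN = assms(1) and cardN = assms(2) and nonneg = assms(4)
  define F where "F j = (\<Sum>S\<in>{S. S \<subseteq> N \<and> card S = j}. f S)" for j
  define g where "g j = expect_unif N j f" for j
  have Fnn: "F j \<ge> 0" for j unfolding F_def using nonneg by (intro sum_nonneg) auto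
  have gF: "g j = F j / real (n choose j)" if jn: "j \<le> n" for j
  proof -
    have ne: "{S. S \<subseteq> N \<and> card S = j} \<noteq> {}"
    proof -
      obtain S where "S \<subseteq> N" "card S = j" using obtain_subset_with_card_n[of j N] jn cardN by blast
      then show ?thesis by auto
    qed
    show ?thesis unfolding g_def expect_unif_def F_def
      using integral_pmf_of_set[OF ne fin_sub[OF finN]] n_subsets[OF finN, of j] cardN by simp
  qed
  have cpos: "real (n choose j) > 0" if "j \<le> n" for j using that by simp
  have dcF: "(\<Sum>T\<in>{T. T \<subseteq> N \<and> card T = Suc j}. \<Sum>e\<in>T. f (T - {e})) = real (n - j) * F j" for j
  proof -
    have "(\<Sum>S\<in>{S. S \<subseteq> N \<and> card S = j}. \<Sum>e\<in>N - S. f S) = (\<Sum>S\<in>{S. S \<subseteq> N \<and> card S = j}. real (n - j) * f S)"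
    proof (rule sum.cong)
      fix S assume "S \<in> {S. S \<subseteq> N \<and> card S = j}"
      then have "card (N - S) = n - j" using cardN finN by (auto simp: card_Diff_subset finite_subset)
      then show "(\<Sum>e\<in>N - S. f S) = real (n - j) * f S" by simp
    qed simp
    then show ?thesis using dc[OF finN, of f j] unfolding F_def by (simp add: sum_distrib_left)
  qed
  have L1: "real (n - j) * F j \<le> real (Suc j) * F (Suc j)" for j
  proof -
    have "(\<Sum>T\<in>{T. T \<subseteq> N \<and> card T = Suc j}. \<Sum>e\<in>T. f (T - {e}))
        \<le> (\<Sum>T\<in>{T. T \<subseteq> N \<and> card T = Suc j}. real (Suc j) * f T)"
    proof (rule sum_mono)
      fix T assume T: "T \<in> {T. T \<subseteq> N \<and> card T = Suc j}"
      have "(\<Sum>e\<in>T. f (T - {e})) \<le> (\<Sum>e\<in>T. f T)"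
        using T assms(5) unfolding monotone_setfun_def by (intro sum_mono) auto
      then show "(\<Sum>e\<in>T. f (T - {e})) \<le> real (Suc j) * f T" using T by simp
    qed
    then show ?thesis using dcF[of j] unfolding F_def by (simp add: sum_distrib_left)
  qed
  have L2: "real j * F (Suc j) \<le> real (n - j) * F j" for j
  proof -
    have "(\<Sum>T\<in>{T. T \<subseteq> N \<and> card T = Suc j}. real j * f T)
        \<le> (\<Sum>T\<in>{T. T \<subseteq> N \<and> card T = Suc j}. \<Sum>e\<in>T. f (T - {e}))"
    proof (rule sum_mono)
      fix T assume T: "T \<in> {T. T \<subseteq> N \<and> card T = Suc j}"
      have fT: "finite T" using T finN finite_subset by auto
      have k: "(\<Sum>e\<in>T. f T - f (T - {e})) \<le> f T - f {}"
        using key_ineq[OF assms(6) fT] T by auto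
      have "(\<Sum>e\<in>T. f T - f (T - {e})) = real (Suc j) * f T - (\<Sum>e\<in>T. f (T - {e}))"
        using T by (simp add: sum_subtractf)
      moreover have "f {} \<ge> 0" using nonneg by auto
      ultimately show "real j * f T \<le> (\<Sum>e\<in>T. f (T - {e}))" using k by (simp add: algebra_simps)
    qed
    then show ?thesis using dcF[of j] unfolding F_def by (simp add: sum_distrib_left)
  qed
  have gmono: "g j \<le> g (Suc j)" if "j < n" for j
  proof -
    have c: "real (Suc j) * real (n choose Suc j) = real (n - j) * real (n choose j)" by (rule choose_rel)
    have p1: "real (n choose j) > 0" "real (n choose Suc j) > 0" using that by auto
    have "g j = real (n - j) * F j / (real (n - j) * real (n choose j))"
      using gF[of j] that p1 by simp
    also have "\<dots> \<le> real (Suc j) * F (Suc j) / (real (Suc j) * real (n choose Suc j))"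
      unfolding c using L1[of j] p1 that by (intro divide_right_mono) auto
    also have "\<dots> = g (Suc j)" using gF[of "Suc j"] that by simp
    finally show ?thesis .
  qed
  have gconc: "real (Suc j) * g j \<ge> real j * g (Suc j)" if "j < n" for j
  proof -
    have c: "real (Suc j) * real (n choose Suc j) = real (n - j) * real (n choose j)" by (rule choose_rel)
    have p1: "real (n choose j) > 0" "real (n choose Suc j) > 0" using that by auto
    have "real j * g (Suc j) = real j * F (Suc j) / real (n choose Suc j)"
      using gF[of "Suc j"] that by simp
    also have "\<dots> \<le> real (n - j) * F j / real (n choose Suc j)"
      using L2[of j] p1 by (intro divide_right_mono) auto
    also have "\<dots> = real (Suc j) * real (n choose Suc j) * F j / (real (n choose j) * real (n choose Suc j))"
      unfolding c using p1 by simp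
    also have "\<dots> = real (Suc j) * g j" using gF[of j] that p1 by simp
    finally show ?thesis .
  qed
  have gmono2: "g j \<le> g l" if "j \<le> l" "l \<le> n" for j l
    using that
  proof (induction l)
    case 0 then show ?case by simp
  next
    case (Suc l)
    show ?case
    proof (cases "j = Suc l")
      case False
      then have "g j \<le> g l" using Suc by auto
      also have "\<dots> \<le> g (Suc l)" using gmono[of l] Suc by auto
      finally show ?thesis .
    qed simp
  qed
  have gconc2: "real l * g j \<ge> real j * g l" if "j \<le> l" "l \<le> n" "1 \<le> j" for j l
    using that
  proof (induction l)
    case 0 then show ?case by simp
  next
    case (Suc l)
    show ?case
    proof (cases "j = Suc l")
      case False
      then have ih: "real l * g j \<ge> real j * g l" and lpos: "l \<ge> 1" using Suc by auto
      have c: "real (Suc l) * g l \<ge> real l * g (Suc l)" using gconc[of l] Suc by auto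
      have "real l * (real j * g (Suc l)) \<le> real j * (real (Suc l) * g l)"
        using mult_left_mono[OF c, of "real j"] by (simp add: algebra_simps)
      also have "\<dots> = real (Suc l) * (real j * g l)" by simp
      also have "\<dots> \<le> real (Suc l) * (real l * g j)" using ih by (intro mult_left_mono) auto
      finally have "real l * (real j * g (Suc l)) \<le> real l * (real (Suc l) * g j)" by (simp add: algebra_simps)
      then show ?thesis using lpos by simp
    qed simp
  qed
  have fs: "f Sstar \<ge> 0" using nonneg assms(9) by auto
  have m1: "m \<ge> 1" using assms(3,7,8) by (cases m) auto
  have mn: "m \<le> n" using assms(3) m1 by (metis mult_le_mono1 mult_1)
  have gm: "g m \<ge> f Sstar / 4" using assms(12) g_def by simp
  show ?thesis
  proof (cases "m \<le> k")
    case True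
    have "min (1/4) (real k / (4 * real m)) * f Sstar \<le> (1/4) * f Sstar"
      using fs by (intro mult_right_mono) auto
    also have "\<dots> \<le> g m" using gm by simp
    also have "\<dots> \<le> g k" using gmono2[of m k] True assms(8) by simp
    finally show ?thesis unfolding g_def .
  next
    case False
    have mpos: "real m > 0" using m1 by simp
    have "real m * g k \<ge> real k * g m" using gconc2[of k m] False assms(7) mn by simp
    moreover have "real k * g m \<ge> real k * (f Sstar / 4)" using gm by (intro mult_left_mono) auto
    ultimately have "real m * g k \<ge> real m * (real k / (4 * real m) * f Sstar)"
      using mpos by (simp add: field_simps)
    then have "g k \<ge> real k / (4 * real m) * f Sstar" using mpos mult_le_cancel_left_pos by blast
    moreover have "min (1/4) (real k / (4 * real m)) * f Sstar \<le> real k / (4 * real m) * f Sstar"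
      using fs by (intro mult_right_mono) auto
    ultimately show ?thesis unfolding g_def by linarith
  qed
qed

end
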